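(* Let $\mathcal{A}$ be the B\"uchi automaton over $\{a,b\}$ with states $q_0$ (initial) and $q_1$ (accepting) and transitions $q_0\xrightarrow{a}q_1$, $q_1\xrightarrow{b}q_0$, so that $\mathfrak{L}(\mathcal{A})=\{(ab)^\omega\}$. Then there is no automaton $\mathcal{C}$ with $\mathfrak{J}(\mathcal{C})=\mathfrak{J}_{\exists\boxplus}(\mathcal{A})$. In particular, $(ab)^\omega\in\mathfrak{J}_{\exists\boxplus}(\mathcal{A})$ while the word $aba^2b^2a^3b^3\cdots$ (which satisfies $\sim$ with $(ab)^\omega$) is not in $\mathfrak{J}_{\exists\boxplus}(\mathcal{A})$.
   Context: Automata are nondeterministic B\"uchi automata over infinite words. For $w\in\Sigma^\omega$, $\Psi(w)\in\mathbb{N}_\infty^\Sigma$ gives the number of occurrences of each letter ($\infty$ if infinite); $w\sim w'$ iff $\Psi(w)=\Psi(w')$; $\mathfrak{J}(\mathcal{C})=\{w:\exists w'\sim w,\ w'\in\mathfrak{L}(\mathcal{C})\}$. For $k\ge1$, $w\sim_{k\boxplus}w'$ means $w=x_1x_2\cdots$, $w'=y_1y_2\cdots$ with $|x_i|=|y_i|=k$ and each $y_i$ a permutation of $x_i$. $\mathfrak{J}_{\exists\boxplus}(\mathcal{A})=\{w:\exists k\ge1\ \exists w'\sim_{k\boxplus}w,\ w'\in\mathfrak{L}(\mathcal{A})\}$. *)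

theory Defs
  imports Main "HOL-Library.Extended_Nat" "HOL-Library.Multiset"
begin

record ('s, 'a) nba =
  states :: "'s set"
  init   :: "'s set"
  delta  :: "('s \<times> 'a \<times> 's) set"
  acc    :: "'s set"

definition wf_nba :: "('s, 'a) nba \<Rightarrow> bool" where
  "wf_nba C \<longleftrightarrow> finite (states C) \<and> init C \<subseteq> states C \<and> acc C \<subseteq> states C
     \<and> (\<forall>p x q. (p, x, q) \<in> delta C \<longrightarrow> p \<in> states C \<and> q \<in> states C)"

definition accepting_run :: "('s, 'a) nba \<Rightarrow> (nat \<Rightarrow> 'a) \<Rightarrow> (nat \<Rightarrow> 's) \<Rightarrow> bool" where
  "accepting_run C w r \<longleftrightarrow> r 0 \<in> init C \<and> (\<forall>i. (r i, w i, r (Suc i)) \<in> delta C)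
     \<and> (\<exists>\<^sub>\<infinity> i. r i \<in> acc C)"

definition lang :: "('s, 'a) nba \<Rightarrow> (nat \<Rightarrow> 'a) set" where
  "lang C = {w. \<exists>r. accepting_run C w r}"

definition Psi :: "(nat \<Rightarrow> 'a) \<Rightarrow> 'a \<Rightarrow> enat" where
  "Psi w x = (if finite {i. w i = x} then enat (card {i. w i = x}) else \<infinity>)"

definition parikh_equiv :: "(nat \<Rightarrow> 'a) \<Rightarrow> (nat \<Rightarrow> 'a) \<Rightarrow> bool" where
  "parikh_equiv w w' \<longleftrightarrow> Psi w = Psi w'"

definition J :: "('s, 'a) nba \<Rightarrow> (nat \<Rightarrow> 'a) set" where
  "J C = {w. \<exists>w'. parikh_equiv w w' \<and> w' \<in> lang C}"

definition block :: "nat \<Rightarrow> (nat \<Rightarrow> 'a) \<Rightarrow> nat \<Rightarrow> 'a list" where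
  "block k w i = map w [i * k..<(Suc i) * k]"

definition block_equiv :: "nat \<Rightarrow> (nat \<Rightarrow> 'a) \<Rightarrow> (nat \<Rightarrow> 'a) \<Rightarrow> bool" where
  "block_equiv k w w' \<longleftrightarrow> (\<forall>i. mset (block k w' i) = mset (block k w i))"

definition J_ex_box :: "('s, 'a) nba \<Rightarrow> (nat \<Rightarrow> 'a) set" where
  "J_ex_box A = {w. \<exists>k\<ge>1. \<exists>w'. block_equiv k w w' \<and> w' \<in> lang A}"

datatype ab = a | b

definition A_ab :: "(nat, ab) nba" where
  "A_ab = \<lparr> states = {0, 1}, init = {0}, delta = {(0, a, 1), (1, b, 0)}, acc = {1} \<rparr>"

definition ab_omega :: "nat \<Rightarrow> ab" where
  "ab_omega i = (if even i then a else b)"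

text \<open>The word a b a^2 b^2 a^3 b^3 ...: block number n (n = 0,1,...) is a^(n+1) b^(n+1),
  occupying positions n(n+1) ..< (n+1)(n+2).\<close>
definition stair_word :: "nat \<Rightarrow> ab" where
  "stair_word p = (let n = (LEAST n. p < (n + 1) * (n + 2))
                   in if p - n * (n + 1) < n + 1 then a else b)"

end

theory Submission
  imports Defs
begin

lemma stair_val:
  assumes "j < 2 * (n + 1)"
  shows "stair_word (n * (n + 1) + j) = (if j < n + 1 then a else b)"
proof -
  have L: "(LEAST m. n * (n + 1) + j < (m + 1) * (m + 2)) = n"
  proof (rule Least_equality)
    show "n * (n + 1) + j < (n + 1) * (n + 2)" using assms by (simp add: algebra_simps)
  next
    fix m assume h: "n * (n + 1) + j < (m + 1) * (m + 2)"
    show "n \<le> m"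
    proof (rule ccontr)
      assume "\<not> n \<le> m"
      then have "m + 1 \<le> n" "m + 2 \<le> n + 1" by auto
      then have "(m + 1) * (m + 2) \<le> n * (n + 1)" by (intro mult_mono) auto
      with h show False by simp
    qed
  qed
  show ?thesis unfolding stair_word_def Let_def L by simp
qed

lemma stair_a: "j \<le> n \<Longrightarrow> stair_word (n * (n + 1) + j) = a"
  using stair_val[of j n] by simp

lemma stair_b: "stair_word (n * (n + 1) + (n + 1)) = b"
  using stair_val[of "n+1" n] by simp

lemma lang_A: "lang A_ab = {ab_omega}"
proof
  show "lang A_ab \<subseteq> {ab_omega}"
  proof
    fix w assume "w \<in> lang A_ab"
    then obtain r where r: "accepting_run A_ab w r" unfolding lang_def by auto
    have r0: "r 0 = 0" and tr: "\<And>i. (r i, w i, r (Suc i)) \<in> {(0, a, 1), (1, b, 0)}"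
      using r unfolding accepting_run_def A_ab_def by auto
    have ri: "r i = (if even i then 0 else 1)" for i
    proof (induction i)
      case 0 then show ?case using r0 by simp
    next
      case (Suc i) then show ?case using tr[of i] by auto
    qed
    have "w i = ab_omega i" for i
      using tr[of i] ri[of i] unfolding ab_omega_def by (auto split: if_splits)
    then show "w \<in> {ab_omega}" by auto
  qed
next
  show "{ab_omega} \<subseteq> lang A_ab"
  proof -
    define r :: "nat \<Rightarrow> nat" where "r i = (if even i then 0 else 1)" for i
    have "accepting_run A_ab ab_omega r"
      unfolding accepting_run_def A_ab_def
    proof (intro conjI allI)
      show "r 0 \<in> init \<lparr>states = {0, 1}, init = {0}, delta = {(0, a, 1), (1, b, 0)}, acc = {1}\<rparr>"
        by (simp add: r_def)
      fix i show "(r i, ab_omega i, r (Suc i)) \<in> delta \<lparr>states = {0, 1}, init = {0}, delta = {(0, a, 1), (1, b, 0)}, acc = {1}\<rparr>"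
        by (simp add: r_def ab_omega_def)
    next
      show "\<exists>\<^sub>\<infinity> i. r i \<in> acc \<lparr>states = {0::nat, 1}, init = {0}, delta = {(0, a, 1), (1, b, 0)}, acc = {1}\<rparr>"
        unfolding INFM_nat
      proof
        fix m show "\<exists>n>m. r n \<in> acc \<lparr>states = {0::nat, 1}, init = {0}, delta = {(0, a, 1), (1, b, 0)}, acc = {1}\<rparr>"
          by (rule exI[of _ "2*m+1"]) (simp add: r_def)
      qed
    qed
    then show ?thesis unfolding lang_def by auto
  qed
qed

lemma unb_inf: "(\<And>m. \<exists>n>m. P n) \<Longrightarrow> infinite {i::nat. P i}"
  using infinite_nat_iff_unbounded by auto

lemma Psi_stair: "Psi stair_word x = \<infinity>"
proof -
  have "infinite {i. stair_word i = x}"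
  proof (cases x)
    case a
    show ?thesis
    proof (rule unb_inf)
      fix m show "\<exists>n>m. stair_word n = x"
        using stair_a[of 0 "m+1"] a by (intro exI[of _ "(m+1)*(m+1+1) + 0"]) auto
    qed
  next
    case b
    show ?thesis
    proof (rule unb_inf)
      fix m show "\<exists>n>m. stair_word n = x"
        using stair_b[of m] b by (intro exI[of _ "m*(m+1) + (m+1)"]) auto
    qed
  qed
  then show ?thesis unfolding Psi_def by simp
qed

lemma Psi_ab: "Psi ab_omega x = \<infinity>"
proof -
  have "infinite {i. ab_omega i = x}"
  proof (cases x)
    case a
    show ?thesis
    proof (rule unb_inf)
      fix m show "\<exists>n>m. ab_omega n = x"
        using a by (intro exI[of _ "2*m+2"]) (auto simp: ab_omega_def)
    qed
  next
    case b
    show ?thesis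
    proof (rule unb_inf)
      fix m show "\<exists>n>m. ab_omega n = x"
        using b by (intro exI[of _ "2*m+1"]) (auto simp: ab_omega_def)
    qed
  qed
  then show ?thesis unfolding Psi_def by simp
qed

lemma peq: "parikh_equiv stair_word ab_omega"
  unfolding parikh_equiv_def using Psi_stair Psi_ab by auto

lemma stair_notin: "stair_word \<notin> J_ex_box A_ab"
proof
  assume "stair_word \<in> J_ex_box A_ab"
  then obtain k where k: "k \<ge> 1" and be: "block_equiv k stair_word ab_omega"
    unfolding J_ex_box_def lang_A by auto
  have M: "mset (block k ab_omega i) = mset (block k stair_word i)" for i
    using be unfolding block_equiv_def by auto
  show False
  proof (cases "k = 1")
    case True
    have "mset [ab_omega 3] = mset [stair_word 3]"
      using M[of 3] True by (simp add: block_def)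
    moreover have "stair_word 3 = a" using stair_a[of 1 1] by (simp add: numeral_3_eq_3)
    ultimately show False by (simp add: ab_omega_def)
  next
    case False
    with k have k2: "k \<ge> 2" by auto
    define n where "n = 2 * k"
    define s where "s = n * (n + 1)"
    define i where "i = s div k + 1"
    have dm: "k * (s div k) + s mod k = s" by simp
    have ml: "s mod k < k" using k by simp
    have lo: "s < i * k" "i * k \<le> s + k"
      unfolding i_def using dm ml by (simp_all add: algebra_simps, linarith+)
    have "b \<in> set (block k ab_omega i)"
    proof -
      have "i * k \<in> set [i * k..<Suc i * k]" "i * k + 1 \<in> set [i * k..<Suc i * k]"
        using k2 by auto
      moreover have "ab_omega (i*k) = b \<or> ab_omega (i*k+1) = b"
        unfolding ab_omega_def by auto
      ultimately show ?thesis unfolding block_def set_map by (metis image_eqI)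
    qed
    then have "b \<in> set (block k stair_word i)"
      using M[of i] by (metis set_mset_mset)
    then obtain p where p: "p \<in> {i * k..<Suc i * k}" "stair_word p = b"
      unfolding block_def by auto
    have "p - s \<le> n" using p lo unfolding n_def by auto
    then have "stair_word (s + (p - s)) = a" unfolding s_def by (rule stair_a)
    moreover have "s + (p - s) = p" using p lo by auto
    ultimately show False using p by simp
  qed
qed

theorem mainTheorem14:
  shows "lang A_ab = {ab_omega}
    \<and> (\<nexists>C :: ('s, ab) nba. wf_nba C \<and> J C = J_ex_box A_ab)
    \<and> ab_omega \<in> J_ex_box A_ab
    \<and> parikh_equiv stair_word ab_omega
    \<and> stair_word \<notin> J_ex_box A_ab"
proof -
  have ab_in: "ab_omega \<in> J_ex_box A_ab"
  proof -
    have "block_equiv 1 ab_omega ab_omega" unfolding block_equiv_def by simp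
    then show ?thesis unfolding J_ex_box_def lang_A by auto
  qed
  have no: "\<nexists>C :: ('s, ab) nba. wf_nba C \<and> J C = J_ex_box A_ab"
  proof
    assume "\<exists>C :: ('s, ab) nba. wf_nba C \<and> J C = J_ex_box A_ab"
    then obtain C :: "('s, ab) nba" where C: "J C = J_ex_box A_ab" by auto
    then have "ab_omega \<in> J C" using ab_in by simp
    then obtain w' where "parikh_equiv ab_omega w'" "w' \<in> lang C" unfolding J_def by auto
    then have "stair_word \<in> J C" using peq unfolding J_def parikh_equiv_def by auto
    then show False using C stair_notin by simp
  qed
  show ?thesis using lang_A no ab_in peq stair_notin by blast
qed

end
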